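(* Let $p$ be a prime number and $G$ a transitive group of degree $p^{2}$. Then there exists $s\in\mathfrak{S}_{p^{2}}$ such that $sGs^{-1}$ contains $P_{1}$ or $P'_{1}$.
   Context: Transitive group of degree $p^2$: a subgroup of $\mathfrak{S}_{p^2}$ acting transitively on $\mathbb{Z}/p^2$. Identify $\mathbb{Z}/p^{2}$ with $\mathbb{F}_{p}\times\mathbb{F}_{p}$ via $a+pb\mapsto(a\bmod p,b\bmod p)$ ($0\le a,b\le p-1$). Let $\rho_{1}(i,j)=(i,j+1)$, $\rho_{2}(i,j)=(i+1,j)$; for $i_0\in\{0,\dots,p-1\}$, $z_{i_0}(i_0,j)=(i_0,j+1)$ and $z_{i_0}(i,j)=(i,j)$ for $i\ne i_0$. With $a_{i,j}=(-1)^{i-j}\binom{i}{j}$ for $i\ge j$ and $0$ otherwise, $\gamma_{n}:=z_{0}^{a_{p-n,0}}\cdots z_{p-1}^{a_{p-n,p-1}}$. Put $\tau:=z_{p-1}\rho_{2}$, $P_{1}:=\langle\tau,\gamma_{1}\rangle$ and $P'_{1}:=\langle\rho_{1},\rho_{2},\gamma_{1}\rangle$. *)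

theory Defs
  imports "HOL-Algebra.Sym_Groups" "HOL-Algebra.Generated_Groups" "HOL-Computational_Algebra.Primes"
begin

definition symN :: "nat \<Rightarrow> (nat \<Rightarrow> nat) monoid"
  where "symN n = \<lparr> carrier = { f. f permutes {0..<n} }, mult = (\<circ>), one = id \<rparr>"

text \<open>Identification Z/p^2 = F_p x F_p, a + p b \<mapsto> (a, b).\<close>
definition idf :: "nat \<Rightarrow> nat \<Rightarrow> nat \<times> nat"
  where "idf p k = (k mod p, k div p)"

definition idf_inv :: "nat \<Rightarrow> nat \<times> nat \<Rightarrow> nat"
  where "idf_inv p ij = fst ij + p * snd ij"

definition lift :: "nat \<Rightarrow> (nat \<times> nat \<Rightarrow> nat \<times> nat) \<Rightarrow> nat \<Rightarrow> nat"
  where "lift p f k = (if k < p^2 then idf_inv p (f (idf p k)) else k)"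

definition rho1 :: "nat \<Rightarrow> nat \<Rightarrow> nat"
  where "rho1 p = lift p (\<lambda>(i, j). (i, (j + 1) mod p))"

definition rho2 :: "nat \<Rightarrow> nat \<Rightarrow> nat"
  where "rho2 p = lift p (\<lambda>(i, j). ((i + 1) mod p, j))"

definition zz :: "nat \<Rightarrow> nat \<Rightarrow> nat \<Rightarrow> nat"
  where "zz p i0 = lift p (\<lambda>(i, j). if i = i0 then (i, (j + 1) mod p) else (i, j))"

definition acoef :: "nat \<Rightarrow> nat \<Rightarrow> int"
  where "acoef i j = (if j \<le> i then (-1) ^ (i - j) * int (i choose j) else 0)"

definition gamma :: "nat \<Rightarrow> nat \<Rightarrow> nat \<Rightarrow> nat"
  where "gamma p n = foldr (\<lambda>i g. (zz p i [^]\<^bsub>symN (p^2)\<^esub> acoef (p - n) i) \<circ> g) [0..<p] id"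

definition tau :: "nat \<Rightarrow> nat \<Rightarrow> nat"
  where "tau p = zz p (p - 1) \<circ> rho2 p"

definition P1 :: "nat \<Rightarrow> (nat \<Rightarrow> nat) set"
  where "P1 p = generate (symN (p^2)) {tau p, gamma p 1}"

definition P1' :: "nat \<Rightarrow> (nat \<Rightarrow> nat) set"
  where "P1' p = generate (symN (p^2)) {rho1 p, rho2 p, gamma p 1}"

definition transitive_group :: "nat \<Rightarrow> (nat \<Rightarrow> nat) set \<Rightarrow> bool"
  where "transitive_group n G \<longleftrightarrow> subgroup G (symN n) \<and>
           (\<forall>x\<in>{0..<n}. \<forall>y\<in>{0..<n}. \<exists>g\<in>G. g x = y)"

end

theory Submission
  imports Defs "HOL-Algebra.Sylow" "HOL-Algebra.Group_Action" "HOL-Algebra.Multiplicative_Group"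
begin


lemma idf_inv_lt: "(i::nat) < p \<Longrightarrow> j < p \<Longrightarrow> i + p * j < p^2"
proof -
  assume a: "i < p" "j < p"
  have "i + p * j < p + p * j" using a by linarith
  also have "\<dots> = p * (Suc j)" by simp
  also have "\<dots> \<le> p * p" using a by (intro mult_le_mono2) simp
  finally show ?thesis by (simp add: power2_eq_square)
qed

lemma lift_at: "i < p \<Longrightarrow> j < p \<Longrightarrow> lift p f (i + p * j) = fst (f (i,j)) + p * snd (f (i,j))"
  using idf_inv_lt[of i p j] by (simp add: lift_def idf_def idf_inv_def)

lemma lift_out: "\<not> k < p^2 \<Longrightarrow> lift p f k = k"
  by (simp add: lift_def)

lemma X_repr: "(k::nat) < p^2 \<Longrightarrow> k = k mod p + p * (k div p) \<and> k mod p < p \<and> k div p < p"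
proof -
  assume k: "k < p^2"
  then have p: "p > 0" by (cases p) auto
  have "k div p < p" using k by (simp add: div_less_iff_less_mult power2_eq_square p)
  then show ?thesis using p by simp
qed

lemma repr_inj: "(i::nat) < p \<Longrightarrow> i' < p \<Longrightarrow> i + p * j = i' + p * j' \<longleftrightarrow> i = i' \<and> j = j'"
proof
  assume a: "i < p" "i' < p" "i + p * j = i' + p * j'"
  have p: "p > 0" using a by simp
  have "i = (i + p * j) mod p" using a(1) by simp
  also have "\<dots> = (i' + p * j') mod p" using a(3) by simp
  also have "\<dots> = i'" using a(2) by simp
  finally have 1: "i = i'" .
  have "j = (i + p * j) div p" using a(1) p by simp
  also have "\<dots> = (i' + p * j') div p" using a(3) by simp
  also have "\<dots> = j'" using a(2) p by simp
  finally show "i = i' \<and> j = j'" using 1 by simp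
qed simp

lemma rho1_at: "i < p \<Longrightarrow> j < p \<Longrightarrow> rho1 p (i + p * j) = i + p * ((j + 1) mod p)"
  by (simp add: rho1_def lift_at)
lemma rho2_at: "i < p \<Longrightarrow> j < p \<Longrightarrow> rho2 p (i + p * j) = (i + 1) mod p + p * j"
  by (simp add: rho2_def lift_at)
lemma zz_at: "i < p \<Longrightarrow> j < p \<Longrightarrow> zz p i0 (i + p * j) = (if i = i0 then i + p * ((j + 1) mod p) else i + p * j)"
  by (simp add: zz_def lift_at)
lemma tau_at: "i < p \<Longrightarrow> j < p \<Longrightarrow> tau p (i + p * j) = (if (i + 1) mod p = p - 1 then (i + 1) mod p + p * ((j + 1) mod p) else (i + 1) mod p + p * j)"
proof -
  assume a: "i < p" "j < p"
  then have "(i+1) mod p < p" by simp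
  then show ?thesis using a by (simp add: tau_def rho2_at zz_at)
qed

lemma rho1_out: "\<not> k < p^2 \<Longrightarrow> rho1 p k = k" by (simp add: rho1_def lift_out)
lemma rho2_out: "\<not> k < p^2 \<Longrightarrow> rho2 p k = k" by (simp add: rho2_def lift_out)
lemma zz_out: "\<not> k < p^2 \<Longrightarrow> zz p i0 k = k" by (simp add: zz_def lift_out)

lemma zz_pow_at: "i < p \<Longrightarrow> j < p \<Longrightarrow> (zz p i0 ^^ m) (i + p * j) = (if i = i0 then i + p * ((j + m) mod p) else i + p * j)"
proof (induction m)
  case 0 then show ?case by simp
next
  case (Suc m)
  have "(j + m) mod p < p" using Suc by simp
  then show ?case using Suc by (simp add: zz_at mod_Suc_eq)
qed

lemma rho1_pow_at: "i < p \<Longrightarrow> j < p \<Longrightarrow> (rho1 p ^^ m) (i + p * j) = i + p * ((j + m) mod p)"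
proof (induction m)
  case 0 then show ?case by simp
next
  case (Suc m)
  have "(j + m) mod p < p" using Suc by simp
  then show ?case using Suc by (simp add: rho1_at mod_Suc_eq)
qed

lemma rho2_pow_at: "i < p \<Longrightarrow> j < p \<Longrightarrow> (rho2 p ^^ m) (i + p * j) = (i + m) mod p + p * j"
proof (induction m)
  case 0 then show ?case by simp
next
  case (Suc m)
  have "(i + m) mod p < p" using Suc by simp
  then show ?case using Suc by (simp add: rho2_at mod_Suc_eq)
qed

lemma funpow_out: "(\<And>x. \<not> x < N \<Longrightarrow> f x = x) \<Longrightarrow> \<not> k < N \<Longrightarrow> (f ^^ m) k = k"
  by (induction m) auto

lemma funpow_id_permutes:
  assumes "f ^^ m = id" "m > 0" "\<And>x. x \<notin> S \<Longrightarrow> f x = x"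
  shows "f permutes S"
proof -
  have "f \<circ> f ^^ (m - 1) = id" using assms(1,2)
    by (metis Suc_diff_1 funpow_Suc_right funpow.simps(2))
  moreover have "f ^^ (m - 1) \<circ> f = id" using assms(1,2)
    by (metis Suc_diff_1 funpow_Suc_right)
  ultimately have "bij f" by (metis o_bij)
  then show ?thesis using assms(3) unfolding permutes_def by (metis bij_iff)
qed

lemma on_X_eq: 
  fixes p :: nat and f g :: "nat \<Rightarrow> 'a"
  assumes "\<And>i j. i < p \<Longrightarrow> j < p \<Longrightarrow> f (i + p * j) = g (i + p * j)" "\<And>k. \<not> k < p^2 \<Longrightarrow> f k = g k"
  shows "f = g"
proof
  fix k show "f k = g k"
  proof (cases "k < p^2")
    case True then show ?thesis using X_repr[OF True] assms(1) by metis
  qed (use assms in auto)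
qed

lemma zz_pow_p: "zz p i0 ^^ p = id"
  by (rule on_X_eq[where p=p]) (auto simp: zz_pow_at funpow_out[OF zz_out])
lemma rho1_pow_p: "rho1 p ^^ p = id"
  by (rule on_X_eq[where p=p]) (auto simp: rho1_pow_at funpow_out[OF rho1_out])
lemma rho2_pow_p: "rho2 p ^^ p = id"
  by (rule on_X_eq[where p=p]) (auto simp: rho2_pow_at funpow_out[OF rho2_out])

lemma X_eq: "{0..<p^2} = {k. k < (p::nat)^2}" by auto

lemma zz_perm: "p > 0 \<Longrightarrow> zz p i0 permutes {0..<p^2}"
  by (rule funpow_id_permutes[OF zz_pow_p]) (auto simp: zz_out)
lemma rho1_perm: "p > 0 \<Longrightarrow> rho1 p permutes {0..<p^2}"
  by (rule funpow_id_permutes[OF rho1_pow_p]) (auto simp: rho1_out)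
lemma rho2_perm: "p > 0 \<Longrightarrow> rho2 p permutes {0..<p^2}"
  by (rule funpow_id_permutes[OF rho2_pow_p]) (auto simp: rho2_out)
lemma tau_perm: "p > 0 \<Longrightarrow> tau p permutes {0..<p^2}"
  unfolding tau_def by (intro permutes_compose zz_perm rho2_perm)

lemma symN_group: "group (symN n)"
proof (rule groupI)
  show "\<one>\<^bsub>symN n\<^esub> \<in> carrier (symN n)" by (simp add: symN_def permutes_id)
next
  fix x y assume "x \<in> carrier (symN n)" "y \<in> carrier (symN n)"
  then show "x \<otimes>\<^bsub>symN n\<^esub> y \<in> carrier (symN n)" by (simp add: symN_def permutes_compose)
next
  fix x y z show "x \<otimes>\<^bsub>symN n\<^esub> y \<otimes>\<^bsub>symN n\<^esub> z = x \<otimes>\<^bsub>symN n\<^esub> (y \<otimes>\<^bsub>symN n\<^esub> z)"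
    by (simp add: symN_def comp_assoc)
next
  fix x show "\<one>\<^bsub>symN n\<^esub> \<otimes>\<^bsub>symN n\<^esub> x = x" by (simp add: symN_def)
next
  fix x assume "x \<in> carrier (symN n)"
  then have "inv_into UNIV x \<in> carrier (symN n)" "inv_into UNIV x \<circ> x = id"
    by (auto simp: symN_def permutes_inv permutes_inv_o)
  then show "\<exists>y\<in>carrier (symN n). y \<otimes>\<^bsub>symN n\<^esub> x = \<one>\<^bsub>symN n\<^esub>"
    by (auto simp: symN_def)
qed

lemma symN_simps: "carrier (symN n) = {f. f permutes {0..<n}}" "x \<otimes>\<^bsub>symN n\<^esub> y = x \<circ> y"
  "\<one>\<^bsub>symN n\<^esub> = id"
  by (simp_all add: symN_def)

lemma symN_inv: "f permutes {0..<n} \<Longrightarrow> inv\<^bsub>symN n\<^esub> f = inv_into UNIV f"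
  by (rule group.inv_equality[OF symN_group]) (simp_all add: symN_simps permutes_inv permutes_inv_o)

lemma symN_pow: "f [^]\<^bsub>symN n\<^esub> (k::nat) = f ^^ k"
  by (induction k) (simp_all add: symN_simps funpow_swap1)

lemma symN_sub_pow: "f [^]\<^bsub>symN n\<lparr>carrier := H\<rparr>\<^esub> (k::nat) = f ^^ k"
  by (induction k) (simp_all add: symN_simps funpow_swap1)

lemma choose_pm1_mod:
  assumes p: "prime p" and "i < p"
  shows "int p dvd int ((p - 1) choose i) - (-1) ^ i"
  using assms(2)
proof (induction i)
  case 0 then show ?case by simp
next
  case (Suc i)
  have p1: "p = Suc (p - 1)" using prime_gt_0_nat[OF p] by simp
  have "Suc (p - 1) choose (Suc i) = ((p - 1) choose i) + ((p - 1) choose (Suc i))" by simp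
  then have "p choose (Suc i) = ((p - 1) choose i) + ((p - 1) choose (Suc i))" by (metis p1)
  then have e: "int ((p - 1) choose (Suc i)) - (-1) ^ Suc i = int (p choose (Suc i)) - (int ((p - 1) choose i) - (-1) ^ i)"
    by simp
  have "p dvd p choose (Suc i)" using Suc.prems p by (intro dvd_choose_prime) auto
  then have "int p dvd int (p choose (Suc i))" by simp
  moreover have "int p dvd int ((p - 1) choose i) - (-1) ^ i" using Suc by simp
  ultimately show ?case unfolding e by (rule dvd_diff)
qed

lemma acoef_mod:
  assumes p: "prime p" and i: "i < p"
  shows "int p dvd acoef (p - 1) i - 1"
proof -
  have le: "i \<le> p - 1" using i by simp
  have "acoef (p - 1) i - 1 = (-1) ^ (p - 1 - i) * (int ((p - 1) choose i) - (-1) ^ i) + ((-1) ^ (p - 1 - i) * (-1) ^ i - 1)"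
    using le by (simp add: acoef_def algebra_simps)
  also have "(-1) ^ (p - 1 - i) * (-1) ^ i = ((-1::int) ^ (p - 1))"
  proof -
    have "p - 1 - i + i = p - 1" using le by simp
    then show ?thesis by (metis power_add[of "-1::int" "p - 1 - i" i])
  qed
  finally have e: "acoef (p - 1) i - 1 = (-1) ^ (p - 1 - i) * (int ((p - 1) choose i) - (-1) ^ i) + ((-1::int) ^ (p - 1) - 1)" .
  have "int p dvd (-1::int) ^ (p - 1) - 1"
  proof (cases "p = 2")
    case True then show ?thesis by simp
  next
    case False
    then have "p > 2" using prime_ge_2_nat[OF p] by simp
    then have "odd p" using p prime_odd_nat by simp
    then have "even (p - 1)" by simp
    then show ?thesis by simp
  qed
  then show ?thesis unfolding e using choose_pm1_mod[OF p i] by (simp add: dvd_add)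
qed

lemma zz_carrier: "p > 0 \<Longrightarrow> zz p i \<in> carrier (symN (p^2))"
  by (simp add: symN_simps zz_perm)

lemma zz_int_pow:
  assumes p: "p > 0" and e: "int p dvd e - 1"
  shows "zz p i [^]\<^bsub>symN (p^2)\<^esub> (e::int) = zz p i"
proof -
  interpret G: group "symN (p^2)" by (rule symN_group)
  have c: "zz p i \<in> carrier (symN (p^2))" using zz_carrier[OF p] .
  have "zz p i [^]\<^bsub>symN (p^2)\<^esub> p = \<one>\<^bsub>symN (p^2)\<^esub>"
    by (simp add: symN_pow zz_pow_p symN_simps)
  then have "G.ord (zz p i) dvd p" using G.pow_eq_id[OF c] by simp
  then have "int (G.ord (zz p i)) dvd e - 1" using e by (meson dvd_trans int_dvd_int_iff)
  then have 1: "zz p i [^]\<^bsub>symN (p^2)\<^esub> (e - 1) = \<one>\<^bsub>symN (p^2)\<^esub>"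
    using G.int_pow_eq_id[OF c] by simp
  have "zz p i [^]\<^bsub>symN (p^2)\<^esub> e = zz p i [^]\<^bsub>symN (p^2)\<^esub> ((1::int) + (e - 1))" by simp
  also have "\<dots> = zz p i [^]\<^bsub>symN (p^2)\<^esub> (1::int) \<otimes>\<^bsub>symN (p^2)\<^esub> zz p i [^]\<^bsub>symN (p^2)\<^esub> (e - 1)"
    by (rule G.int_pow_mult[OF c])
  also have "\<dots> = zz p i" using 1 c by simp
  finally show ?thesis .
qed

lemma foldr_zz_at:
  assumes "distinct xs" "i < p" "j < p"
  shows "foldr (\<lambda>a g. zz p a \<circ> g) xs id (i + p * j) = (if i \<in> set xs then i + p * ((j + 1) mod p) else i + p * j)"
  using assms
proof (induction xs)
  case Nil then show ?case by simp
next
  case (Cons a xs)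
  have "(j + 1) mod p < p" using Cons by simp
  then show ?case using Cons by (auto simp: zz_at)
qed

lemma foldr_zz_out: "\<not> k < p^2 \<Longrightarrow> foldr (\<lambda>a g. zz p a \<circ> g) xs id k = k"
  by (induction xs) (auto simp: zz_out)

lemma gamma_eq: "prime p \<Longrightarrow> gamma p 1 = rho1 p"
proof -
  assume p: "prime p"
  then have p0: "p > 0" by (simp add: prime_gt_0_nat)
  have "gamma p 1 = foldr (\<lambda>a g. zz p a \<circ> g) [0..<p] id"
    unfolding gamma_def
  proof (rule foldr_cong)
    fix x a assume "x \<in> set [0..<p]"
    then have "zz p x [^]\<^bsub>symN (p^2)\<^esub> acoef (p - 1) x = zz p x"
      using zz_int_pow[OF p0 acoef_mod[OF p]] by simp
    then show "zz p x [^]\<^bsub>symN (p^2)\<^esub> acoef (p - 1) x \<circ> a = zz p x \<circ> a" by simp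
  qed simp_all
  also have "\<dots> = rho1 p"
    by (rule on_X_eq[where p=p]) (auto simp: foldr_zz_at rho1_at foldr_zz_out rho1_out)
  finally show ?thesis .
qed



lemma funpow_comm_pt: "(\<And>y. f (h y) = h (f y)) \<Longrightarrow> f ((h ^^ n) y) = (h ^^ n) (f y)"
  by (induction n arbitrary: y) auto

lemma funpow_comm2: "(\<And>y. f (h y) = h (f y)) \<Longrightarrow> (f ^^ m) ((h ^^ n) y) = (h ^^ n) ((f ^^ m) y)"
proof (induction m arbitrary: y)
  case (Suc m)
  then show ?case by (simp add: funpow_comm_pt[of f h])
qed simp

lemma funpow_id_pow: "(id ^^ q) = id"
  by (induction q) simp_all

lemma funpow_mod_id: "z ^^ p = id \<Longrightarrow> z ^^ m = z ^^ (m mod p)"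
proof -
  assume z: "z ^^ p = id"
  have 1: "z ^^ (p * (m div p)) = id" by (metis funpow_mult z funpow_id_pow) 
  have "z ^^ m = z ^^ (m mod p) \<circ> z ^^ (p * (m div p))"
    by (metis funpow_add mod_mult_div_eq mult.commute add.commute)
  then show ?thesis using 1 by simp
qed

lemma perm_in: "f permutes S \<Longrightarrow> y \<in> S \<Longrightarrow> (f ^^ n) y \<in> S"
  by (simp add: permutes_in_image[OF permutes_funpow])

lemma perm_inj_pow: "f permutes S \<Longrightarrow> (f ^^ n) u = (f ^^ n) v \<Longrightarrow> u = v"
  by (erule injD[OF inj_fn[OF permutes_inj]])

lemma struct_aux_b:
  fixes p :: nat and g z :: "nat \<Rightarrow> nat"
  assumes gperm: "g permutes S" and zperm: "z permutes S"
    and comm: "\<And>y. g (z y) = z (g y)"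
    and zp: "z ^^ p = id"
    and nb: "\<And>k a. 0 < k \<Longrightarrow> k < p \<Longrightarrow> (g ^^ k) x \<noteq> (z ^^ a) x"
    and le: "b \<le> b'" "b' < p" "a' < p"
    and eq: "(z ^^ a) ((g ^^ b) x) = (z ^^ a') ((g ^^ b') x)"
  shows "b = b'"
proof (rule ccontr)
  assume ne: "b \<noteq> b'"
  have "(g ^^ b') x = (g ^^ (b + (b' - b))) x" using le by simp
  also have "\<dots> = (g ^^ b) ((g ^^ (b' - b)) x)" by (simp add: funpow_add)
  finally have "(g ^^ b') x = (g ^^ b) ((g ^^ (b' - b)) x)" .
  then have "(g ^^ b) ((z ^^ a) x) = (g ^^ b) ((z ^^ a') ((g ^^ (b' - b)) x))"
    using eq by (simp add: funpow_comm2[of g z, OF comm])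
  then have e1: "(z ^^ a) x = (z ^^ a') ((g ^^ (b' - b)) x)" using perm_inj_pow[OF gperm] by blast
  have zz: "(z ^^ (p - a')) ((z ^^ a') w) = w" for w
  proof -
    have "(z ^^ (p - a')) ((z ^^ a') w) = (z ^^ (p - a' + a')) w" by (simp add: funpow_add)
    also have "p - a' + a' = p" using le by simp
    finally have "(z ^^ (p - a')) ((z ^^ a') w) = (z ^^ p) w" .
    then show ?thesis using zp by simp
  qed
  have "(z ^^ (p - a')) ((z ^^ a) x) = (z ^^ (p - a')) ((z ^^ a') ((g ^^ (b' - b)) x))" using e1 by simp
  then have "(g ^^ (b' - b)) x = (z ^^ (p - a')) ((z ^^ a) x)" using zz by simp
  also have "\<dots> = (z ^^ (p - a' + a)) x" by (simp add: funpow_add)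
  finally have "(g ^^ (b' - b)) x = (z ^^ (p - a' + a)) x" .
  moreover have "0 < b' - b" "b' - b < p" using le ne by linarith+
  ultimately show False using nb[of "b' - b" "p - a' + a"] by simp
qed

lemma struct_aux_a:
  fixes p :: nat and z :: "nat \<Rightarrow> nat"
  assumes zperm: "z permutes S"
    and zfree: "\<And>y k. y \<in> S \<Longrightarrow> 0 < k \<Longrightarrow> k < p \<Longrightarrow> (z ^^ k) y \<noteq> y"
    and le: "a \<le> a'" "a' < p" "y \<in> S"
    and eq: "(z ^^ a) y = (z ^^ a') y"
  shows "a = a'"
proof (rule ccontr)
  assume ne: "a \<noteq> a'"
  have "(z ^^ a') y = (z ^^ (a + (a' - a))) y" using le by simp
  also have "\<dots> = (z ^^ a) ((z ^^ (a' - a)) y)" by (simp add: funpow_add)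
  finally have "(z ^^ a') y = (z ^^ a) ((z ^^ (a' - a)) y)" .
  then have "y = (z ^^ (a' - a)) y" using eq perm_inj_pow[OF zperm] by metis
  moreover have "0 < a' - a" "a' - a < p" using le ne by linarith+
  ultimately show False using zfree[OF le(3), of "a' - a"] by simp
qed

lemma struct_bij:
  fixes p :: nat and g z :: "nat \<Rightarrow> nat" and x :: nat
  assumes gperm: "g permutes {0..<p^2}" and zperm: "z permutes {0..<p^2}"
    and comm: "\<And>y. g (z y) = z (g y)"
    and zp: "z ^^ p = id"
    and zfree: "\<And>y k. y \<in> {0..<p^2} \<Longrightarrow> 0 < k \<Longrightarrow> k < p \<Longrightarrow> (z ^^ k) y \<noteq> y"
    and x: "x < p^2"
    and nb: "\<And>k a. 0 < k \<Longrightarrow> k < p \<Longrightarrow> (g ^^ k) x \<noteq> (z ^^ a) x"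
  shows "bij_betw (\<lambda>(a,b). (z ^^ a) ((g ^^ b) x)) ({0..<p} \<times> {0..<p}) {0..<p^2}"
proof -
  let ?f = "\<lambda>(a,b). (z ^^ a) ((g ^^ b) x)"
  have inX: "?f ab \<in> {0..<p^2}" for ab
    using x perm_in[OF zperm] perm_in[OF gperm] by (cases ab) auto
  have bb: "b = b'" if "b < p" "b' < p" "a < p" "a' < p" "?f (a,b) = ?f (a',b')" for a b a' b'
  proof (cases "b \<le> b'")
    case True
    have e: "(z ^^ a) ((g ^^ b) x) = (z ^^ a') ((g ^^ b') x)" using that(5) by simp
    show ?thesis by (rule struct_aux_b[OF gperm zperm comm zp nb True that(2) that(4) e])
  next
    case False
    have e: "(z ^^ a') ((g ^^ b') x) = (z ^^ a) ((g ^^ b) x)" using that(5) by simp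
    have le': "b' \<le> b" using False by linarith
    have "b' = b" by (rule struct_aux_b[OF gperm zperm comm zp nb le' that(1) that(3) e])
    then show ?thesis by simp
  qed
  have inj: "inj_on ?f ({0..<p} \<times> {0..<p})"
  proof (rule inj_onI)
    fix u v assume hu: "u \<in> {0..<p} \<times> {0..<p}" "v \<in> {0..<p} \<times> {0..<p}" "?f u = ?f v"
    obtain a b where u: "u = (a,b)" by (cases u)
    obtain a' b' where v: "v = (a',b')" by (cases v)
    have h: "a < p" "b < p" "a' < p" "b' < p" "?f (a,b) = ?f (a',b')" using hu u v by auto
    then have "b = b'" using bb by blast
    have y: "(g ^^ b) x \<in> {0..<p^2}" using x perm_in[OF gperm] by simp
    have e: "(z ^^ a) ((g ^^ b) x) = (z ^^ a') ((g ^^ b) x)" using h \<open>b = b'\<close> by simp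
    have "a = a'"
    proof (cases "a \<le> a'")
      case True then show ?thesis using struct_aux_a[OF zperm zfree True h(3) y e] by simp
    next
      case False then show ?thesis using struct_aux_a[OF zperm zfree _ h(1) y e[symmetric]] by simp
    qed
    then show "u = v" using \<open>b = b'\<close> u v by simp
  qed
  have "card (?f ` ({0..<p} \<times> {0..<p})) = card {0..<p^2}"
    using card_image[OF inj] by (simp add: power2_eq_square)
  moreover have "?f ` ({0..<p} \<times> {0..<p}) \<subseteq> {0..<p^2}" using inX by blast
  ultimately have "?f ` ({0..<p} \<times> {0..<p}) = {0..<p^2}" by (simp add: card_subset_eq)
  then show ?thesis using inj by (simp add: bij_betw_def)
qed

lemma struct_rule_z:
  assumes zp: "z ^^ p = id"
  shows "z ((z ^^ a) y) = (z ^^ ((a + 1) mod p)) y"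
proof -
  have "z ((z ^^ a) y) = (z ^^ (a + 1)) y" by simp
  also have "\<dots> = (z ^^ ((a + 1) mod p)) y" by (subst funpow_mod_id[OF zp]) (rule refl)
  finally show ?thesis .
qed

lemma struct_rule_g:
  assumes comm: "\<And>y. g (z y) = z (g y)" and zp: "z ^^ p = id" and gp: "(g ^^ p) x = (z ^^ c) x"
    and b: "b < p"
  shows "g ((z ^^ a) ((g ^^ b) x)) = (if b + 1 < p then (z ^^ a) ((g ^^ (b + 1)) x) else (z ^^ ((a + c) mod p)) ((g ^^ 0) x))"
proof -
  have "g ((z ^^ a) ((g ^^ b) x)) = (z ^^ a) ((g ^^ (b + 1)) x)"
    by (simp add: funpow_comm_pt[of g z, OF comm])
  moreover have "(z ^^ a) ((g ^^ (b + 1)) x) = (z ^^ ((a + c) mod p)) x" if "\<not> b + 1 < p"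
  proof -
    have "b + 1 = p" using b that by simp
    then have "(z ^^ a) ((g ^^ (b + 1)) x) = (z ^^ a) ((z ^^ c) x)" using gp by simp
    also have "\<dots> = (z ^^ (a + c)) x" by (simp add: funpow_add)
    also have "\<dots> = (z ^^ ((a + c) mod p)) x" by (subst funpow_mod_id[OF zp]) (rule refl)
    finally show ?thesis .
  qed
  ultimately show ?thesis by simp
qed

definition conjmap :: "(nat \<times> nat) set \<Rightarrow> (nat \<times> nat \<Rightarrow> nat) \<Rightarrow> (nat \<times> nat \<Rightarrow> nat) \<Rightarrow> nat \<Rightarrow> nat \<Rightarrow> nat"
  where "conjmap B \<phi> \<psi> N k = (if k < N then \<psi> (inv_into B \<phi> k) else k)"

lemma conjmap_perm:
  assumes b1: "bij_betw \<phi> B {0..<N}" and b2: "bij_betw \<psi> B {0..<N}"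
  shows "conjmap B \<phi> \<psi> N permutes {0..<N}"
proof -
  have "bij_betw (\<psi> \<circ> inv_into B \<phi>) {0..<N} {0..<N}"
    using bij_betw_trans[OF bij_betw_inv_into[OF b1] b2] .
  then have "bij_betw (conjmap B \<phi> \<psi> N) {0..<N} {0..<N}"
    by (rule bij_betw_cong[THEN iffD1, rotated]) (simp add: conjmap_def)
  then show ?thesis by (rule bij_imp_permutes) (simp add: conjmap_def)
qed

lemma conjmap_intertwine:
  assumes b1: "bij_betw \<phi> B {0..<N}" and b2: "bij_betw \<psi> B {0..<N}"
    and u: "u permutes {0..<N}" and u': "u' permutes {0..<N}"
    and f: "\<And>ab. ab \<in> B \<Longrightarrow> f ab \<in> B"
    and r1: "\<And>ab. ab \<in> B \<Longrightarrow> u (\<phi> ab) = \<phi> (f ab)"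
    and r2: "\<And>ab. ab \<in> B \<Longrightarrow> u' (\<psi> ab) = \<psi> (f ab)"
  shows "conjmap B \<phi> \<psi> N \<circ> u = u' \<circ> conjmap B \<phi> \<psi> N"
proof
  fix k
  show "(conjmap B \<phi> \<psi> N \<circ> u) k = (u' \<circ> conjmap B \<phi> \<psi> N) k"
  proof (cases "k < N")
    case True
    then have "k \<in> \<phi> ` B" using b1 by (auto simp: bij_betw_def)
    then obtain ab where ab: "ab \<in> B" "k = \<phi> ab" by blast
    have inj: "inj_on \<phi> B" using b1 by (simp add: bij_betw_def)
    have "f ab \<in> B" using f ab(1) .
    then have "\<phi> ab < N" "\<phi> (f ab) < N" using b1 ab(1) by (auto simp: bij_betw_def)
    then show ?thesis using ab r1 r2 f inv_into_f_f[OF inj] by (simp add: conjmap_def)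
  next
    case False
    then have "u k = k" "u' k = k" using u u' by (auto simp: permutes_def)
    then show ?thesis using False by (simp add: conjmap_def)
  qed
qed


definition blk :: "(nat \<Rightarrow> nat) \<Rightarrow> nat \<Rightarrow> nat set" where "blk z y = range (\<lambda>a. (z ^^ a) y)"

lemma blk_self: "y \<in> blk z y"
  unfolding blk_def by (metis funpow_0 rangeI)

lemma blk_mem_eq:
  assumes zp: "z ^^ p = id" and p0: "p > 0" and y': "y' \<in> blk z y"
  shows "blk z y' = blk z y"
proof -
  obtain a where a: "y' = (z ^^ a) y" using y' unfolding blk_def by blast
  have "(z ^^ b) y' = (z ^^ (b + a)) y" for b using a by (simp add: funpow_add)
  then have 1: "blk z y' \<subseteq> blk z y" unfolding blk_def by (auto simp del: funpow.simps)
  have pa: "z ^^ (a * (p - 1) + a) = id"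
  proof -
    have "a * (p - 1) + a = p * a" using p0 by (cases p) (simp_all add: algebra_simps)
    then show ?thesis using zp by (simp add: funpow_mult[where f=z and m=p and n=a, symmetric] funpow_id_pow)
  qed
  have "(z ^^ b) y = (z ^^ (b + a * (p - 1))) y'" for b
  proof -
    have "(z ^^ (b + a * (p - 1))) y' = (z ^^ b) ((z ^^ (a * (p - 1) + a)) y)" using a by (simp add: funpow_add)
    then show ?thesis using pa by simp
  qed
  then have 2: "blk z y \<subseteq> blk z y'" unfolding blk_def by (auto simp del: funpow.simps)
  show ?thesis using 1 2 by blast
qed

lemma blk_disj:
  assumes zp: "z ^^ p = id" and p0: "p > 0" and "blk z y \<inter> blk z y' \<noteq> {}"
  shows "blk z y = blk z y'"
  using assms blk_mem_eq[OF zp p0] by blast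

lemma blk_image:
  assumes comm: "\<And>y. g (z y) = z (g y)"
  shows "(g ^^ k) ` blk z y = blk z ((g ^^ k) y)"
  unfolding blk_def by (auto simp: funpow_comm2[of g z, OF comm] image_iff)

lemma blk_fin: "z ^^ p = id \<Longrightarrow> p > 0 \<Longrightarrow> blk z y = (\<lambda>a. (z ^^ a) y) ` {0..<p}"
  unfolding blk_def
proof (auto simp: image_iff)
  fix a assume zp: "z ^^ p = id" and p0: "p > 0"
  have "(z ^^ a) y = (z ^^ (a mod p)) y" by (subst funpow_mod_id[OF zp]) (rule refl)
  then show "\<exists>x\<in>{0..<p}. (z ^^ a) y = (z ^^ x) y" using p0 by (intro bexI[of _ "a mod p"]) auto
qed

lemma blk_card:
  assumes zp: "z ^^ p = id" and p0: "p > 0" and zperm: "z permutes S" and y: "y \<in> S"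
    and zfree: "\<And>y k. y \<in> S \<Longrightarrow> 0 < k \<Longrightarrow> k < p \<Longrightarrow> (z ^^ k) y \<noteq> y"
  shows "card (blk z y) = p"
proof -
  have "inj_on (\<lambda>a. (z ^^ a) y) {0..<p}"
  proof (rule inj_onI)
    fix a a' assume h: "a \<in> {0..<p}" "a' \<in> {0..<p}" "(z ^^ a) y = (z ^^ a') y"
    show "a = a'"
    proof (cases "a \<le> a'")
      case True then show ?thesis using struct_aux_a[OF zperm zfree True _ y h(3)] h(2) by simp
    next
      case False then show ?thesis using struct_aux_a[OF zperm zfree _ _ y h(3)[symmetric]] h(1) by simp
    qed
  qed
  then show ?thesis using blk_fin[OF zp p0] by (simp add: card_image)
qed

lemma blk_sub: "z permutes S \<Longrightarrow> y \<in> S \<Longrightarrow> blk z y \<subseteq> S"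
  unfolding blk_def by (auto simp: perm_in)

lemma find_g:
  fixes p e :: nat and P :: "(nat \<Rightarrow> nat) set" and z :: "nat \<Rightarrow> nat"
  assumes p: "prime p"
    and Pperm: "\<And>h. h \<in> P \<Longrightarrow> h permutes {0..<p^2}"
    and trans: "\<And>y. y < p^2 \<Longrightarrow> \<exists>h\<in>P. h 0 = y"
    and zperm: "z permutes {0..<p^2}"
    and central: "\<And>h y. h \<in> P \<Longrightarrow> h (z y) = z (h y)"
    and zp: "z ^^ p = id"
    and zfree: "\<And>y k. y \<in> {0..<p^2} \<Longrightarrow> 0 < k \<Longrightarrow> k < p \<Longrightarrow> (z ^^ k) y \<noteq> y"
    and ordP: "\<And>h. h \<in> P \<Longrightarrow> h ^^ (p ^ e) = id"
  shows "\<exists>g\<in>P. (\<forall>k a. 0 < k \<longrightarrow> k < p \<longrightarrow> (g ^^ k) 0 \<noteq> (z ^^ a) 0) \<and> (\<exists>c<p. (g ^^ p) 0 = (z ^^ c) 0)"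
proof -
  have p2: "p \<ge> 2" using prime_ge_2_nat[OF p] .
  then have p0: "p > 0" by simp
  define X where "X = {0..<p^2}"
  have X0: "0 \<in> X" using p0 by (simp add: X_def)
  define B0 where "B0 = blk z 0"
  have cB0: "card B0 = p" unfolding B0_def using blk_card[OF zp p0 zperm _ zfree] p0 by simp
  have sB0: "B0 \<subseteq> X" unfolding B0_def X_def by (rule blk_sub[OF zperm]) (simp add: p0)
  have "p < p^2" using p2 by (simp add: power2_eq_square)
  have "B0 \<noteq> X"
  proof
    assume "B0 = X" then have "card B0 = p^2" by (simp add: X_def)
    then show False using cB0 \<open>p < p^2\<close> by simp
  qed
  then obtain y where y: "y \<in> X" "y \<notin> B0" using sB0 by blast
  then obtain g where g: "g \<in> P" "g 0 = y" using trans by (auto simp: X_def)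
  have gperm: "g permutes X" using Pperm[OF g(1)] by (simp add: X_def)
  have comm: "\<And>w. g (z w) = z (g w)" using central[OF g(1)] .
  have ginj: "inj (g ^^ i)" for i using inj_fn[OF permutes_inj[OF gperm]] .
  define F where "F k = blk z ((g ^^ k) 0)" for k
  define Q where "Q k \<longleftrightarrow> (g ^^ k) 0 \<in> B0" for k
  have QF: "Q k \<longleftrightarrow> F k = B0" for k
    unfolding Q_def F_def B0_def using blk_mem_eq[OF zp p0] blk_self by metis
  have Fimg0: "(g ^^ i) ` B0 = F i" for i unfolding B0_def F_def using blk_image[where g=g and z=z, OF comm] by simp
  have Fimg: "F (i + j) = (g ^^ i) ` F j" for i j
    unfolding F_def using blk_image[where g=g and z=z and k=i and y="(g ^^ j) 0", OF comm] by (simp add: funpow_add)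
  have Qadd: "Q (i + j)" if "Q i" "Q j" for i j
    using that Fimg Fimg0 QF by metis
  have Qsub: "Q j" if "Q (i + j)" "Q i" for i j
  proof -
    have "(g ^^ i) ` F j = (g ^^ i) ` B0" using that Fimg Fimg0 QF by metis
    then have "F j = B0" using ginj by (simp add: inj_image_eq_iff)
    then show ?thesis using QF by simp
  qed
  have Q0: "Q 0" unfolding Q_def B0_def using blk_self by simp
  have QN: "Q (p ^ e)" unfolding Q_def using ordP[OF g(1)] Q0 Q_def by simp
  have Q1: "\<not> Q 1" unfolding Q_def using g y by simp
  have pe0: "p ^ e > 0" using p0 by simp
  define d where "d = (LEAST k. 0 < k \<and> Q k)"
  have d: "0 < d \<and> Q d" unfolding d_def by (rule LeastI[of _ "p ^ e"]) (use pe0 QN in simp)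
  have dmin: "\<not> Q k" if "0 < k" "k < d" for k using not_less_Least[of k "\<lambda>k. 0 < k \<and> Q k"] that unfolding d_def by blast
  have d1: "d \<noteq> 1" using d Q1 by metis
  have Qmult: "Q (q * d)" for q
  proof (induction q)
    case 0 then show ?case using Q0 by simp
  next
    case (Suc q) then show ?case using Qadd[of d "q * d"] d by (simp add: add.commute)
  qed
  have "p ^ e = (p ^ e div d) * d + p ^ e mod d" by simp
  then have "Q (p ^ e mod d)" using Qsub[of "(p ^ e div d) * d" "p ^ e mod d"] Qmult QN by metis
  moreover have "p ^ e mod d < d" using d by simp
  ultimately have "p ^ e mod d = 0" using dmin by (metis neq0_conv)
  then have "d dvd p ^ e" by (simp add: dvd_eq_mod_eq_0)
  then obtain f where f: "d = p ^ f" using divides_primepow_nat[OF p] by blast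
  have f1: "f \<ge> 1" using f d1 by (cases f) auto
  have dle: "d \<le> p"
  proof (rule ccontr)
    assume "\<not> d \<le> p"
    then have dp: "p < d" by simp
    have Fne: "F i \<noteq> F j" if "i < j" "j \<le> p" for i j
    proof
      assume "F i = F j"
      then have "(g ^^ i) ` F (j - i) = (g ^^ i) ` B0" using Fimg[of i "j - i"] Fimg0[of i] that by simp
      then have "F (j - i) = B0" using ginj by (simp add: inj_image_eq_iff)
      then have "Q (j - i)" using QF by simp
      moreover have "0 < j - i" "j - i < d" using that dp by auto
      ultimately show False using dmin by blast
    qed
    have Fdisj: "F i \<inter> F j = {}" if "i \<le> p" "j \<le> p" "i \<noteq> j" for i j
    proof (cases "i < j")
      case True then show ?thesis using Fne[of i j] that blk_disj[OF zp p0] unfolding F_def by blast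
    next
      case False then have "j < i" using that by simp
      then show ?thesis using Fne[of j i] that blk_disj[OF zp p0] unfolding F_def by blast
    qed
    have cF: "card (F i) = p" for i
    proof -
      have "(g ^^ i) 0 \<in> X" using perm_in[OF gperm X0] .
      then show ?thesis unfolding F_def X_def by (rule blk_card[OF zp p0 zperm _ zfree])
    qed
    have fF: "finite (F i)" for i using cF p0 card_ge_0_finite by (metis)
    have "card (\<Union>i\<in>{0..p}. F i) = (\<Sum>i\<in>{0..p}. card (F i))"
      by (rule card_UN_disjoint) (use fF Fdisj in auto)
    also have "\<dots> = (p + 1) * p" using cF by simp
    finally have cU: "card (\<Union>i\<in>{0..p}. F i) = (p + 1) * p" .
    have "(\<Union>i\<in>{0..p}. F i) \<subseteq> X"
    proof -
      have "F i \<subseteq> X" for i unfolding F_def X_def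
        by (rule blk_sub[OF zperm]) (use perm_in[OF gperm X0] in \<open>simp add: X_def\<close>)
      then show ?thesis by blast
    qed
    then have "card (\<Union>i\<in>{0..p}. F i) \<le> card X" by (intro card_mono) (simp_all add: X_def)
    then have "(p + 1) * p \<le> p * p" using cU by (simp add: X_def power2_eq_square)
    then show False using p0 by simp
  qed
  have dp: "d = p"
  proof (cases "f \<ge> 2")
    case True
    then have "p ^ 2 \<le> p ^ f" using p0 by (simp add: power_increasing)
    then show ?thesis using dle f \<open>p < p^2\<close> by simp
  next
    case False then have "f = 1" using f1 by simp
    then show ?thesis using f by simp
  qed
  have nb: "\<forall>k a. 0 < k \<longrightarrow> k < p \<longrightarrow> (g ^^ k) 0 \<noteq> (z ^^ a) 0"
  proof (intro allI impI)
    fix k a assume "0 < k" "k < p"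
    then have "\<not> Q k" using dmin dp by simp
    then show "(g ^^ k) 0 \<noteq> (z ^^ a) 0" unfolding Q_def B0_def blk_def by auto
  qed
  have "Q p" using d dp by simp
  then obtain a where a: "(g ^^ p) 0 = (z ^^ a) 0" unfolding Q_def B0_def blk_def by auto
  have "(z ^^ a) 0 = (z ^^ (a mod p)) 0" by (subst funpow_mod_id[OF zp]) (rule refl)
  then have "(g ^^ p) 0 = (z ^^ (a mod p)) 0" "a mod p < p" using a p0 by simp_all
  then show ?thesis using g(1) nb by blast
qed



lemma (in group_action) fixed_mod:
  assumes fin: "finite E" and ordG: "order G = p ^ a" and p: "prime p" and pE: "p dvd card E"
  shows "p dvd card {x\<in>E. \<forall>g\<in>carrier G. \<phi> g x = x}"
proof -
  define Fix where "Fix = {x\<in>E. \<forall>g\<in>carrier G. \<phi> g x = x}"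
  interpret G: group G using group_hom group_hom.axioms(1) by blast
  have orb_sub: "orb \<subseteq> E" if "orb \<in> orbits G E \<phi>" for orb
    using orbits_coverture that by blast
  have orb_fin: "finite orb" if "orb \<in> orbits G E \<phi>" for orb
    using orb_sub[OF that] fin finite_subset by blast
  have fixed_orbit: "orbit G \<phi> x = {x}" if "x \<in> Fix" for x
    using that G.one_closed unfolding Fix_def orbit_def by (auto intro!: exI[of _ "\<one>\<^bsub>G\<^esub>"])
  have t_dvd: "p dvd card orb - card (orb \<inter> Fix)" if orb: "orb \<in> orbits G E \<phi>" for orb
  proof -
    obtain x where x: "x \<in> E" "orb = orbit G \<phi> x" using orb unfolding orbits_def by blast
    show ?thesis
    proof (cases "x \<in> Fix")
      case True
      then have "orb = {x}" using fixed_orbit x by simp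
      then show ?thesis using True by simp
    next
      case False
      have "orb \<inter> Fix = {}"
      proof (rule ccontr)
        assume "orb \<inter> Fix \<noteq> {}"
        then obtain y where y: "y \<in> orb" "y \<in> Fix" by blast
        then have "y \<in> E" unfolding Fix_def by simp
        have "x \<in> orbit G \<phi> y" using orbit_sym[OF x(1) \<open>y \<in> E\<close>] y x by blast
        then have "x = y" using fixed_orbit[OF y(2)] by simp
        then show False using False y by simp
      qed
      moreover have "p dvd card orb"
      proof -
        have "card orb * card (stabilizer G \<phi> x) = p ^ a" using orbit_stabilizer_theorem[OF x(1)] x ordG by simp
        then have "card orb dvd p ^ a" by (metis dvd_triv_left)
        then obtain i where i: "card orb = p ^ i" using divides_primepow_nat[OF p] by blast
        have "i \<noteq> 0"
        proof
          assume "i = 0"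
          then have c1: "card orb = 1" using i by simp
          have "x \<in> orb" using orbit_refl[OF x(1)] x by simp
          then have ox: "orb = {x}" using c1 by (metis card_1_singletonE singletonD)
          obtain g where g: "g \<in> carrier G" "\<phi> g x \<noteq> x" using False x(1) unfolding Fix_def by blast
          have "\<phi> g x \<in> orb" using g x unfolding orbit_def by blast
          then show False using ox g by simp
        qed
        then show ?thesis using i by simp
      qed
      ultimately show ?thesis by simp
    qed
  qed
  have finO: "finite (orbits G E \<phi>)" using fin unfolding orbits_def by simp
  have s1: "(\<Sum>orb\<in>orbits G E \<phi>. card orb) = card E"
    using disjoint_sum[OF fin, of "\<lambda>_. (1::nat)"] by simp
  have s2: "(\<Sum>orb\<in>orbits G E \<phi>. card (orb \<inter> Fix)) = card Fix"
  proof -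
    have "(\<Sum>orb\<in>orbits G E \<phi>. card (orb \<inter> Fix)) = (\<Sum>orb\<in>orbits G E \<phi>. \<Sum>x\<in>orb. (if x \<in> Fix then 1 else 0))"
    proof (rule sum.cong)
      fix orb assume o: "orb \<in> orbits G E \<phi>"
      have "orb \<inter> Fix = {x\<in>orb. x \<in> Fix}" by blast
      from card_as_sums[OF this orb_fin[OF o]]
      show "card (orb \<inter> Fix) = (\<Sum>x\<in>orb. (if x \<in> Fix then 1 else 0))" .
    qed simp
    also have "\<dots> = (\<Sum>x\<in>E. (if x \<in> Fix then 1 else 0))" by (rule disjoint_sum[OF fin])
    also have "\<dots> = card Fix"
      using card_as_sums[of Fix E "\<lambda>x. x \<in> Fix"] fin unfolding Fix_def by auto
    finally show ?thesis .
  qed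
  have "(\<Sum>orb\<in>orbits G E \<phi>. card orb - card (orb \<inter> Fix)) = card E - card Fix"
    using sum_subtractf_nat[of "orbits G E \<phi>" "\<lambda>orb. card (orb \<inter> Fix)" card] s1 s2 orb_fin
    by (simp add: card_mono)
  moreover have "p dvd (\<Sum>orb\<in>orbits G E \<phi>. card orb - card (orb \<inter> Fix))"
    by (rule dvd_sum) (rule t_dvd)
  ultimately have "p dvd card E - card Fix" by simp
  moreover have "card Fix \<le> card E" using fin unfolding Fix_def by (intro card_mono) auto
  ultimately have "p dvd card Fix" using pE by (metis dvd_diffD1)
  then show ?thesis unfolding Fix_def .
qed

lemma (in group) comm_pow:
  assumes "g \<in> carrier G" "z \<in> carrier G" "g \<otimes> z = z \<otimes> g"
  shows "g \<otimes> z [^] (n::nat) = z [^] n \<otimes> g"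
proof (induction n)
  case 0 then show ?case using assms by simp
next
  case (Suc n)
  have "g \<otimes> z [^] Suc n = (g \<otimes> z [^] n) \<otimes> z" using assms by (simp add: m_assoc)
  also have "\<dots> = z [^] n \<otimes> (g \<otimes> z)" using Suc assms by (simp add: m_assoc)
  also have "\<dots> = z [^] Suc n \<otimes> g" using assms by (simp add: m_assoc)
  finally show ?case .
qed

lemma (in group) central_elem_p:
  assumes fin: "finite (carrier G)" and ordG: "order G = p ^ a" and a: "a \<ge> 1" and p: "prime p"
  shows "\<exists>z\<in>carrier G. z [^] p = \<one> \<and> (\<forall>j. 0 < j \<longrightarrow> j < p \<longrightarrow> z [^] j \<noteq> \<one>) \<and> (\<forall>g\<in>carrier G. g \<otimes> z = z \<otimes> g)"
proof -
  interpret A: group_action G "carrier G" "\<lambda>g. \<lambda>h\<in>carrier G. g \<otimes> h \<otimes> inv g"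
    by (rule action_by_conjugation)
  define Fix where "Fix = {x\<in>carrier G. \<forall>g\<in>carrier G. (\<lambda>h\<in>carrier G. g \<otimes> h \<otimes> inv g) x = x}"
  have "p dvd card (carrier G)" using ordG a unfolding order_def by (simp add: dvd_power)
  then have pF: "p dvd card Fix" unfolding Fix_def by (rule A.fixed_mod[OF fin ordG p])
  have oneF: "\<one> \<in> Fix" unfolding Fix_def by simp
  have finF: "finite Fix" using fin unfolding Fix_def by simp
  have "card Fix \<noteq> 0" using oneF finF by auto
  then have "card Fix \<ge> p" using pF by (simp add: dvd_imp_le)
  then have "card Fix \<ge> 2" using prime_ge_2_nat[OF p] by simp
  have "\<exists>z0\<in>Fix. z0 \<noteq> \<one>"
  proof (rule ccontr)
    assume "\<not> (\<exists>z0\<in>Fix. z0 \<noteq> \<one>)"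
    then have "Fix \<subseteq> {\<one>}" by blast
    then have "card Fix \<le> card {\<one>}" by (intro card_mono) simp_all
    then have "card Fix \<le> 1" by simp
    then show False using \<open>card Fix \<ge> 2\<close> by simp
  qed
  then obtain z0 where z0F: "z0 \<in> Fix" and z0ne: "z0 \<noteq> \<one>" by blast
  have z0: "z0 \<in> carrier G" using z0F unfolding Fix_def by simp
  have cent0: "g \<otimes> z0 = z0 \<otimes> g" if g: "g \<in> carrier G" for g
  proof -
    have e: "g \<otimes> z0 \<otimes> inv g = z0" using z0F g z0 unfolding Fix_def by auto
    have "g \<otimes> z0 = g \<otimes> z0 \<otimes> inv g \<otimes> g" using g z0 by (simp add: m_assoc)
    also have "\<dots> = z0 \<otimes> g" using e by simp
    finally show ?thesis .
  qed
  have "ord z0 dvd p ^ a" using ord_dvd_group_order[OF z0] ordG by simp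
  then obtain k where k: "ord z0 = p ^ k" using divides_primepow_nat[OF p] by blast
  have k0: "k \<noteq> 0"
  proof
    assume "k = 0"
    then have "z0 [^] (1::nat) = \<one>" using pow_eq_id[OF z0, of 1] k by simp
    then have "z0 = \<one>" using z0 by simp
    then show False using z0ne by simp
  qed
  define z where "z = z0 [^] (p ^ (k - 1))"
  have z: "z \<in> carrier G" unfolding z_def using z0 by simp
  have zj: "z [^] j = \<one> \<longleftrightarrow> p dvd j" for j :: nat
  proof -
    have "z [^] j = z0 [^] (p ^ (k - 1) * j)" unfolding z_def using z0 by (simp add: nat_pow_pow)
    then have "z [^] j = \<one> \<longleftrightarrow> p ^ k dvd p ^ (k - 1) * j" using pow_eq_id[OF z0] k by simp
    also have "p ^ k = p ^ (k - 1) * p" using k0 by (metis Suc_diff_1 neq0_conv power_Suc2)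
    also have "p ^ (k - 1) * p dvd p ^ (k - 1) * j \<longleftrightarrow> p dvd j" using prime_gt_0_nat[OF p] by simp
    finally show ?thesis .
  qed
  have "z [^] p = \<one>" using zj by simp
  moreover have "\<forall>j. 0 < j \<longrightarrow> j < p \<longrightarrow> z [^] j \<noteq> \<one>" using zj by (auto dest: dvd_imp_le)
  moreover have "\<forall>g\<in>carrier G. g \<otimes> z = z \<otimes> g" unfolding z_def using comm_pow[OF _ z0] cent0 by blast
  ultimately show ?thesis using z by blast
qed

lemma conj_from_intertwine:
  assumes s: "s \<in> carrier (symN n)" and u: "u \<in> carrier (symN n)" and u': "u' \<in> carrier (symN n)"
    and e: "s \<circ> u = u' \<circ> s"
  shows "inv\<^bsub>symN n\<^esub> s \<otimes>\<^bsub>symN n\<^esub> u' \<otimes>\<^bsub>symN n\<^esub> s = u"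
proof -
  interpret S: group "symN n" by (rule symN_group)
  have "inv\<^bsub>symN n\<^esub> s \<otimes>\<^bsub>symN n\<^esub> u' \<otimes>\<^bsub>symN n\<^esub> s = inv\<^bsub>symN n\<^esub> s \<otimes>\<^bsub>symN n\<^esub> (u' \<otimes>\<^bsub>symN n\<^esub> s)"
    using s u' by (simp add: S.m_assoc)
  also have "u' \<otimes>\<^bsub>symN n\<^esub> s = s \<otimes>\<^bsub>symN n\<^esub> u" using e by (simp add: symN_simps)
  also have "inv\<^bsub>symN n\<^esub> s \<otimes>\<^bsub>symN n\<^esub> (s \<otimes>\<^bsub>symN n\<^esub> u) = u"
    using s u by (simp add: S.m_assoc[symmetric])
  finally show ?thesis .
qed

lemma final_incl:
  assumes s: "s \<in> carrier (symN n)" and G: "subgroup G (symN n)" and A: "A \<subseteq> carrier (symN n)"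
    and conj: "\<And>a. a \<in> A \<Longrightarrow> inv\<^bsub>symN n\<^esub> s \<otimes>\<^bsub>symN n\<^esub> a \<otimes>\<^bsub>symN n\<^esub> s \<in> G"
  shows "generate (symN n) A \<subseteq> (\<lambda>g. s \<circ> g \<circ> inv\<^bsub>symN n\<^esub> s) ` G"
proof -
  interpret S: group "symN n" by (rule symN_group)
  let ?c = "\<lambda>h. inv\<^bsub>symN n\<^esub> s \<otimes>\<^bsub>symN n\<^esub> h \<otimes>\<^bsub>symN n\<^esub> s"
  have sx: "s \<otimes>\<^bsub>symN n\<^esub> (inv\<^bsub>symN n\<^esub> s \<otimes>\<^bsub>symN n\<^esub> x) = x" if "x \<in> carrier (symN n)" for x
    using s that by (simp add: S.m_assoc[symmetric])
  have cG: "?c h \<in> G" if "h \<in> generate (symN n) A" for h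
    using that
  proof (induction h rule: generate.induct)
    case one then show ?case using s subgroup.one_closed[OF G] by simp
  next
    case (incl h) then show ?case using conj by simp
  next
    case (inv h)
    have h: "h \<in> carrier (symN n)" using inv A by blast
    have "?c (inv\<^bsub>symN n\<^esub> h) = inv\<^bsub>symN n\<^esub> (?c h)"
      using s h by (simp add: S.inv_mult_group S.m_assoc)
    then show ?case using subgroup.m_inv_closed[OF G conj[OF inv]] by simp
  next
    case (eng h1 h2)
    have h: "h1 \<in> carrier (symN n)" "h2 \<in> carrier (symN n)"
      using eng.hyps S.generate_in_carrier[OF A] by blast+
    have "?c (h1 \<otimes>\<^bsub>symN n\<^esub> h2) = ?c h1 \<otimes>\<^bsub>symN n\<^esub> ?c h2"
      using s h by (simp add: S.m_assoc sx)
    then show ?case using subgroup.m_closed[OF G eng.IH] by simp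
  qed
  show ?thesis
  proof
    fix h assume h: "h \<in> generate (symN n) A"
    then have hc: "h \<in> carrier (symN n)" using S.generate_in_carrier[OF A] by blast
    have "h = s \<otimes>\<^bsub>symN n\<^esub> ?c h \<otimes>\<^bsub>symN n\<^esub> inv\<^bsub>symN n\<^esub> s"
      using s hc by (simp add: S.m_assoc sx)
    then have "h = s \<circ> ?c h \<circ> inv\<^bsub>symN n\<^esub> s" by (simp add: symN_simps)
    then show "h \<in> (\<lambda>g. s \<circ> g \<circ> inv\<^bsub>symN n\<^esub> s) ` G" using cG[OF h] by blast
  qed
qed



lemma sub_symN_group: "subgroup H (symN n) \<Longrightarrow> group ((symN n)\<lparr>carrier := H\<rparr>)"
  by (rule subgroup.subgroup_is_group[OF _ symN_group])

lemma sub_perm: "subgroup H (symN n) \<Longrightarrow> h \<in> H \<Longrightarrow> h permutes {0..<n}"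
proof -
  assume H: "subgroup H (symN n)" and h: "h \<in> H"
  have "h \<in> carrier (symN n)" using subgroup.subset[OF H] h by blast
  then show ?thesis by (simp add: symN_simps)
qed

lemma perm_action:
  assumes H: "subgroup H (symN n)"
  shows "group_action ((symN n)\<lparr>carrier := H\<rparr>) {0..<n} (\<lambda>h. restrict h {0..<n})"
  unfolding group_action_def group_hom_def group_hom_axioms_def
proof (intro conjI)
  show "group ((symN n)\<lparr>carrier := H\<rparr>)" by (rule sub_symN_group[OF H])
  show "group (BijGroup {0..<n})" by (rule group_BijGroup)
  have bij: "restrict h {0..<n} \<in> Bij {0..<n}" if "h \<in> H" for h
  proof -
    have "bij_betw h {0..<n} {0..<n}" using permutes_imp_bij[OF sub_perm[OF H that]] .
    moreover have "\<And>a. a \<in> {0..<n} \<Longrightarrow> restrict h {0..<n} a = h a" by simp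
    ultimately have "bij_betw (restrict h {0..<n}) {0..<n} {0..<n}" using bij_betw_cong by blast
    then show ?thesis unfolding Bij_def by simp
  qed
  show "(\<lambda>h. restrict h {0..<n}) \<in> hom ((symN n)\<lparr>carrier := H\<rparr>) (BijGroup {0..<n})"
  proof (rule homI)
    fix h assume "h \<in> carrier ((symN n)\<lparr>carrier := H\<rparr>)"
    then show "restrict h {0..<n} \<in> carrier (BijGroup {0..<n})" using bij by (simp add: BijGroup_def)
  next
    fix x y assume xy: "x \<in> carrier ((symN n)\<lparr>carrier := H\<rparr>)" "y \<in> carrier ((symN n)\<lparr>carrier := H\<rparr>)"
    then have xy': "x \<in> H" "y \<in> H" by simp_all
    have yin: "y k \<in> {0..<n}" if "k \<in> {0..<n}" for k
      using permutes_in_image[OF sub_perm[OF H xy'(2)]] that by simp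
    show "restrict (x \<otimes>\<^bsub>(symN n)\<lparr>carrier := H\<rparr>\<^esub> y) {0..<n} =
          restrict x {0..<n} \<otimes>\<^bsub>BijGroup {0..<n}\<^esub> restrict y {0..<n}"
    proof -
      have "restrict x {0..<n} \<otimes>\<^bsub>BijGroup {0..<n}\<^esub> restrict y {0..<n} = compose {0..<n} (restrict x {0..<n}) (restrict y {0..<n})"
        using bij[OF xy'(1)] bij[OF xy'(2)] by (simp add: BijGroup_def)
      also have "\<dots> = restrict (x \<circ> y) {0..<n}"
        unfolding compose_def using yin by (intro restrict_ext) simp
      finally show ?thesis by (simp add: symN_simps)
    qed
  qed
qed

lemma perm_orbit: "x \<in> {0..<n} \<Longrightarrow> orbit ((symN n)\<lparr>carrier := H\<rparr>) (\<lambda>h. restrict h {0..<n}) x = (\<lambda>h. h x) ` H"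
  unfolding orbit_def by auto

lemma perm_stab: "x \<in> {0..<n} \<Longrightarrow> stabilizer ((symN n)\<lparr>carrier := H\<rparr>) (\<lambda>h. restrict h {0..<n}) x = {h\<in>H. h x = x}"
  unfolding stabilizer_def by auto

lemma finite_symN_sub: "subgroup H (symN n) \<Longrightarrow> finite H"
proof -
  assume H: "subgroup H (symN n)"
  have "H \<subseteq> {f. f permutes {0..<n}}" using sub_perm[OF H] by blast
  then show ?thesis using finite_permutations[of "{0..<n}"] finite_subset by blast
qed

lemma stab_sub:
  assumes H: "subgroup H (symN n)" and x: "x \<in> {0..<n}"
  shows "subgroup {h\<in>H. h x = x} (symN n)"
proof -
  interpret A: group_action "(symN n)\<lparr>carrier := H\<rparr>" "{0..<n}" "\<lambda>h. restrict h {0..<n}"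
    by (rule perm_action[OF H])
  have "subgroup {h\<in>H. h x = x} ((symN n)\<lparr>carrier := H\<rparr>)"
    using A.stabilizer_subgroup[OF x] perm_stab[OF x] by simp
  then show ?thesis using group.incl_subgroup[OF symN_group H] by blast
qed

lemma orbit_stab_card:
  assumes H: "subgroup H (symN n)" and x: "x \<in> {0..<n}"
  shows "card ((\<lambda>h. h x) ` H) * card {h\<in>H. h x = x} = card H"
proof -
  interpret A: group_action "(symN n)\<lparr>carrier := H\<rparr>" "{0..<n}" "\<lambda>h. restrict h {0..<n}"
    by (rule perm_action[OF H])
  show ?thesis using A.orbit_stabilizer_theorem[OF x] perm_orbit[OF x] perm_stab[OF x]
    by (simp add: order_def)
qed

lemma sylow_transitive:
  assumes p: "prime p" and G: "transitive_group (p^2) G"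
  shows "\<exists>P a. subgroup P (symN (p^2)) \<and> P \<subseteq> G \<and> card P = p ^ a \<and> a \<ge> 2 \<and> (\<forall>y<p^2. \<exists>h\<in>P. h 0 = y)"
proof -
  define N where "N = p^2"
  define X where "X = {0..<N}"
  have p0: "p > 0" using prime_gt_0_nat[OF p] .
  have x0: "0 \<in> X" using p0 by (simp add: X_def N_def)
  have Gs: "subgroup G (symN N)" and Gt: "\<And>x y. x \<in> X \<Longrightarrow> y \<in> X \<Longrightarrow> \<exists>g\<in>G. g x = y"
    using G unfolding transitive_group_def N_def X_def by auto
  have finG: "finite G" using finite_symN_sub[OF Gs] .
  have cX: "card X = p^2" by (simp add: X_def N_def)
  have inX: "h 0 \<in> X" if "h \<in> H" "subgroup H (symN N)" for h H
    using permutes_in_image[OF sub_perm[OF that(2) that(1)]] x0 unfolding X_def by simp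
  have orbG: "(\<lambda>h. h 0) ` G = X"
  proof
    show "(\<lambda>h. h 0) ` G \<subseteq> X" using inX[OF _ Gs] by blast
    show "X \<subseteq> (\<lambda>h. h 0) ` G" using Gt[OF x0] by (auto simp: image_iff)
  qed
  define SG where "SG = {h\<in>G. h 0 = 0}"
  have cG: "card G = p^2 * card SG"
    using orbit_stab_card[OF Gs x0[unfolded X_def]] orbG cX unfolding SG_def X_def by simp
  have "\<one>\<^bsub>symN N\<^esub> \<in> G" by (rule subgroup.one_closed[OF Gs])
  then have "G \<noteq> {}" by blast
  then have cG0: "card G \<noteq> 0" using card_0_eq[OF finG] by blast
  have np: "\<not> is_unit p" using p not_prime_unit by blast
  define a where "a = multiplicity p (card G)"
  have pa: "p ^ a dvd card G" unfolding a_def by (rule multiplicity_dvd)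
  have a2: "a \<ge> 2" unfolding a_def using multiplicity_geI[OF cG0 np, of 2] cG by simp
  define Gg where "Gg = (symN N)\<lparr>carrier := G\<rparr>"
  have grpG: "group Gg" unfolding Gg_def by (rule sub_symN_group[OF Gs])
  have "order Gg = p ^ a * (card G div p ^ a)" using pa unfolding Gg_def order_def by simp
  then obtain P where PGg: "subgroup P Gg" and cP: "card P = p ^ a"
    using sylow_thm[OF p grpG] finG unfolding Gg_def by auto
  have Ps: "subgroup P (symN N)" using group.incl_subgroup[OF symN_group Gs] PGg unfolding Gg_def by blast
  have PG: "P \<subseteq> G" using subgroup.subset[OF PGg] unfolding Gg_def by simp
  define SP where "SP = {h\<in>P. h 0 = 0}"
  have cP': "card ((\<lambda>h. h 0) ` P) * card SP = p ^ a"
    using orbit_stab_card[OF Ps x0[unfolded X_def]] cP unfolding SP_def by simp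
  have SGs: "subgroup SG (symN N)" unfolding SG_def by (rule stab_sub[OF Gs x0[unfolded X_def]])
  have SPs: "subgroup SP (symN N)" unfolding SP_def by (rule stab_sub[OF Ps x0[unfolded X_def]])
  have "SP \<subseteq> SG" using PG unfolding SP_def SG_def by blast
  then have "subgroup SP ((symN N)\<lparr>carrier := SG\<rparr>)" using group.subgroup_incl[OF symN_group SPs SGs] by simp
  from group.lagrange[OF sub_symN_group[OF SGs] this]
  obtain r where "r * card SP = card SG" unfolding order_def by auto
  then have "card SP dvd card SG" by (metis dvd_triv_right)
  moreover have "card SP dvd p ^ a" unfolding cP'[symmetric] by (rule dvd_triv_right)
  then obtain e where e: "card SP = p ^ e" using divides_primepow_nat[OF p] by blast
  ultimately have "p ^ e * p ^ 2 dvd card G" using cG by (simp add: mult.commute)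
  then have "p ^ (e + 2) dvd card G" unfolding power_add .
  then have ea: "e + 2 \<le> a" unfolding a_def by (rule multiplicity_geI[OF cG0 np])
  have "card ((\<lambda>h. h 0) ` P) * p ^ e = p ^ (a - e) * p ^ e" using cP' e ea by (simp add: power_add[symmetric])
  then have co: "card ((\<lambda>h. h 0) ` P) = p ^ (a - e)" using p0 by simp
  have "p ^ 2 \<le> p ^ (a - e)" using ea p0 by (intro power_increasing) auto
  then have cge: "card X \<le> card ((\<lambda>h. h 0) ` P)" using co cX by simp
  have sub: "(\<lambda>h. h 0) ` P \<subseteq> X" using inX[OF _ Ps] by blast
  have "(\<lambda>h. h 0) ` P = X" by (rule card_seteq) (use sub cge in \<open>simp_all add: X_def\<close>)
  then have "\<forall>y<p^2. \<exists>h\<in>P. h 0 = y"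
  proof (intro allI impI)
    fix y :: nat assume "y < p^2"
    then have "y \<in> (\<lambda>h. h 0) ` P" using \<open>(\<lambda>h. h 0) ` P = X\<close> by (simp add: X_def N_def)
    then show "\<exists>h\<in>P. h 0 = y" by blast
  qed
  then show ?thesis using Ps PG cP a2 unfolding N_def by blast
qed



lemma box_bij:
  fixes f :: "nat \<times> nat \<Rightarrow> nat"
  assumes inj: "inj_on f ({0..<p} \<times> {0..<p})" and lt: "\<And>a b. a < p \<Longrightarrow> b < p \<Longrightarrow> f (a, b) < p^2"
  shows "bij_betw f ({0..<p} \<times> {0..<p}) {0..<p^2}"
proof -
  have "card (f ` ({0..<p} \<times> {0..<p})) = card {0..<p^2}"
    using card_image[OF inj] by (simp add: power2_eq_square)
  moreover have "f ` ({0..<p} \<times> {0..<p}) \<subseteq> {0..<p^2}" using lt by auto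
  ultimately have "f ` ({0..<p} \<times> {0..<p}) = {0..<p^2}" by (simp add: card_subset_eq)
  then show ?thesis using inj by (simp add: bij_betw_def)
qed

definition psi0 :: "nat \<Rightarrow> nat \<times> nat \<Rightarrow> nat" where "psi0 p = (\<lambda>(a, b). b + p * a)"
definition psi1 :: "nat \<Rightarrow> nat \<times> nat \<Rightarrow> nat"
  where "psi1 p = (\<lambda>(a, b). if b < p - 1 then b + p * a else (p - 1) + p * ((a + 1) mod p))"

lemma psi0_bij: "bij_betw (psi0 p) ({0..<p} \<times> {0..<p}) {0..<p^2}"
proof (rule box_bij)
  show "inj_on (psi0 p) ({0..<p} \<times> {0..<p})"
    by (rule inj_onI) (auto simp: psi0_def repr_inj)
qed (simp add: psi0_def idf_inv_lt)

lemma psi1_bij: assumes p2: "p \<ge> 2" shows "bij_betw (psi1 p) ({0..<p} \<times> {0..<p}) {0..<p^2}"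
proof (rule box_bij)
  have pm: "p - 1 < p" using p2 by simp
  show "inj_on (psi1 p) ({0..<p} \<times> {0..<p})"
  proof (rule inj_onI, clarify)
    fix a b a' b' assume h: "a \<in> {0..<p}" "b \<in> {0..<p}" "a' \<in> {0..<p}" "b' \<in> {0..<p}"
      "psi1 p (a, b) = psi1 p (a', b')"
    have m1: "(a + 1) mod p < p" "(a' + 1) mod p < p" using p2 by simp_all
    show "a = a' \<and> b = b'"
    proof (cases "b < p - 1"; cases "b' < p - 1")
      assume "b < p - 1" "b' < p - 1"
      then show ?thesis using h by (auto simp: psi1_def repr_inj)
    next
      assume "b < p - 1" "\<not> b' < p - 1"
      then have "b + p * a = (p - 1) + p * ((a' + 1) mod p)" using h by (simp add: psi1_def)
      then have "b = p - 1" using repr_inj[of b p "p - 1" a "(a' + 1) mod p"] h pm by simp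
      then show ?thesis using \<open>b < p - 1\<close> by simp
    next
      assume "\<not> b < p - 1" "b' < p - 1"
      then have "b' + p * a' = (p - 1) + p * ((a + 1) mod p)" using h by (simp add: psi1_def)
      then have "b' = p - 1" using repr_inj[of b' p "p - 1" a' "(a + 1) mod p"] h pm by simp
      then show ?thesis using \<open>b' < p - 1\<close> by simp
    next
      assume "\<not> b < p - 1" "\<not> b' < p - 1"
      then have bb: "b = p - 1" "b' = p - 1" using h by auto
      then have "(p - 1) + p * ((a + 1) mod p) = (p - 1) + p * ((a' + 1) mod p)" using h by (simp add: psi1_def)
      then have "(a + 1) mod p = (a' + 1) mod p" using repr_inj[OF pm pm] by blast
      then have "a = a'" using h by (auto simp: mod_Suc split: if_splits)
      then show ?thesis using bb by simp
    qed
  qed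
next
  fix a b assume "a < p" "b < p"
  have "p - 1 < p" "(a + 1) mod p < p" using p2 by simp_all
  then have "(p - 1) + p * ((a + 1) mod p) < p^2" by (rule idf_inv_lt)
  then show "psi1 p (a, b) < p^2" using \<open>a < p\<close> \<open>b < p\<close> by (auto simp: psi1_def idf_inv_lt)
qed

lemma psi0_rho1: "a < p \<Longrightarrow> b < p \<Longrightarrow> rho1 p (psi0 p (a, b)) = psi0 p ((a + 1) mod p, b)"
  by (simp add: psi0_def rho1_at)

lemma psi0_rho2: "a < p \<Longrightarrow> b < p \<Longrightarrow>
  rho2 p (psi0 p (a, b)) = psi0 p (if b + 1 < p then (a, b + 1) else ((a + 0) mod p, 0))"
proof -
  assume ab: "a < p" "b < p"
  show ?thesis
  proof (cases "b + 1 < p")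
    case True then show ?thesis using ab by (simp add: psi0_def rho2_at)
  next
    case False then have "b + 1 = p" using ab by simp
    then show ?thesis using ab by (simp add: psi0_def rho2_at)
  qed
qed

lemma psi1_rho1: assumes p2: "p \<ge> 2" and ab: "a < p" "b < p"
  shows "rho1 p (psi1 p (a, b)) = psi1 p ((a + 1) mod p, b)"
proof (cases "b < p - 1")
  case True then show ?thesis using ab by (simp add: psi1_def rho1_at)
next
  case False
  define A where "A = (a + 1) mod p"
  have A: "A < p" using p2 by (simp add: A_def)
  have pm: "p - 1 < p" using p2 by simp
  have e1: "psi1 p (a, b) = (p - 1) + p * A" using False by (simp add: psi1_def A_def)
  have e2: "rho1 p ((p - 1) + p * A) = (p - 1) + p * ((A + 1) mod p)" by (rule rho1_at[OF pm A])
  have e3: "psi1 p (A, b) = (p - 1) + p * ((A + 1) mod p)" using False by (simp add: psi1_def)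
  show ?thesis using e1 e2 e3 by (simp add: A_def)
qed

lemma psi1_tau: assumes p2: "p \<ge> 2" and ab: "a < p" "b < p"
  shows "tau p (psi1 p (a, b)) = psi1 p (if b + 1 < p then (a, b + 1) else ((a + 1) mod p, 0))"
proof -
  define A where "A = (a + 1) mod p"
  have A: "A < p" using p2 by (simp add: A_def)
  have pm: "p - 1 < p" using p2 by simp
  consider "b + 1 < p - 1" | "b + 1 = p - 1" | "b = p - 1" using ab by linarith
  then show ?thesis
  proof cases
    case 1
    then have e1: "psi1 p (a, b) = b + p * a" by (simp add: psi1_def)
    have "tau p (b + p * a) = (if (b + 1) mod p = p - 1 then (b + 1) mod p + p * ((a + 1) mod p) else (b + 1) mod p + p * a)"
      by (rule tau_at[OF ab(2) ab(1)])
    also have "\<dots> = (b + 1) + p * a" using 1 by simp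
    finally show ?thesis using e1 1 by (simp add: psi1_def)
  next
    case 2
    then have e1: "psi1 p (a, b) = b + p * a" by (simp add: psi1_def)
    have "tau p (b + p * a) = (if (b + 1) mod p = p - 1 then (b + 1) mod p + p * ((a + 1) mod p) else (b + 1) mod p + p * a)"
      by (rule tau_at[OF ab(2) ab(1)])
    also have "\<dots> = (p - 1) + p * A" using 2 pm by (simp add: A_def)
    finally have "tau p (psi1 p (a, b)) = (p - 1) + p * A" using e1 by simp
    moreover have "psi1 p (a, b + 1) = (p - 1) + p * A" using 2 by (simp add: psi1_def A_def)
    ultimately show ?thesis using 2 pm by simp
  next
    case 3
    then have e1: "psi1 p (a, b) = (p - 1) + p * A" by (simp add: psi1_def A_def)
    have "tau p ((p - 1) + p * A) = (if ((p - 1) + 1) mod p = p - 1 then ((p - 1) + 1) mod p + p * ((A + 1) mod p) else ((p - 1) + 1) mod p + p * A)"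
      by (rule tau_at[OF pm A])
    also have "\<dots> = p * A" using p2 by simp
    finally have "tau p (psi1 p (a, b)) = p * A" using e1 by simp
    moreover have "psi1 p (A, 0) = p * A" using p2 by (simp add: psi1_def)
    moreover have "\<not> b + 1 < p" using 3 p2 by simp
    ultimately show ?thesis by (simp add: A_def)
  qed
qed



lemma make_conj:
  fixes p c :: nat and g z u1 u2 :: "nat \<Rightarrow> nat" and \<psi> :: "nat \<times> nat \<Rightarrow> nat"
  assumes p0: "p > 0"
    and gperm: "g permutes {0..<p^2}" and zperm: "z permutes {0..<p^2}"
    and comm: "\<And>y. g (z y) = z (g y)"
    and zp: "z ^^ p = id"
    and zfree: "\<And>y k. y \<in> {0..<p^2} \<Longrightarrow> 0 < k \<Longrightarrow> k < p \<Longrightarrow> (z ^^ k) y \<noteq> y"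
    and nb: "\<And>k a. 0 < k \<Longrightarrow> k < p \<Longrightarrow> (g ^^ k) 0 \<noteq> (z ^^ a) 0"
    and gp: "(g ^^ p) 0 = (z ^^ c) 0"
    and psi: "bij_betw \<psi> ({0..<p} \<times> {0..<p}) {0..<p^2}"
    and u1: "u1 permutes {0..<p^2}" and u2: "u2 permutes {0..<p^2}"
    and r1: "\<And>a b. a < p \<Longrightarrow> b < p \<Longrightarrow> u1 (\<psi> (a, b)) = \<psi> ((a + 1) mod p, b)"
    and r2: "\<And>a b. a < p \<Longrightarrow> b < p \<Longrightarrow> u2 (\<psi> (a, b)) = \<psi> (if b + 1 < p then (a, b + 1) else ((a + c) mod p, 0))"
  shows "\<exists>s\<in>carrier (symN (p^2)). inv\<^bsub>symN (p^2)\<^esub> s \<otimes>\<^bsub>symN (p^2)\<^esub> u1 \<otimes>\<^bsub>symN (p^2)\<^esub> s = z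
            \<and> inv\<^bsub>symN (p^2)\<^esub> s \<otimes>\<^bsub>symN (p^2)\<^esub> u2 \<otimes>\<^bsub>symN (p^2)\<^esub> s = g"
proof -
  define B where "B = {0..<p} \<times> {0..<p}"
  define \<phi> where "\<phi> = (\<lambda>(a, b). (z ^^ a) ((g ^^ b) (0::nat)))"
  have x0: "(0::nat) < p^2" using p0 by simp
  have phi: "bij_betw \<phi> B {0..<p^2}" unfolding \<phi>_def B_def
    by (rule struct_bij[OF gperm zperm comm zp zfree x0 nb])
  have psi': "bij_betw \<psi> B {0..<p^2}" using psi by (simp add: B_def)
  define s where "s = conjmap B \<phi> \<psi> (p^2)"
  have sperm: "s permutes {0..<p^2}" unfolding s_def by (rule conjmap_perm[OF phi psi'])
  have sc: "s \<in> carrier (symN (p^2))" using sperm by (simp add: symN_simps)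
  have i1: "s \<circ> z = u1 \<circ> s" unfolding s_def
  proof (rule conjmap_intertwine[OF phi psi' zperm u1, where f = "\<lambda>(a, b). ((a + 1) mod p, b)"])
    fix ab assume "ab \<in> B"
    then obtain a b where ab: "ab = (a, b)" "a < p" "b < p" unfolding B_def by auto
    show "(\<lambda>(a, b). ((a + 1) mod p, b)) ab \<in> B" using ab p0 by (simp add: B_def)
    show "z (\<phi> ab) = \<phi> ((\<lambda>(a, b). ((a + 1) mod p, b)) ab)"
      using ab struct_rule_z[OF zp] by (simp add: \<phi>_def)
    show "u1 (\<psi> ab) = \<psi> ((\<lambda>(a, b). ((a + 1) mod p, b)) ab)" using ab r1 by simp
  qed
  define f2 where "f2 = (\<lambda>(a, b). if b + 1 < p then (a, b + 1) else ((a + c) mod p, (0::nat)))"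
  have i2: "s \<circ> g = u2 \<circ> s" unfolding s_def
  proof (rule conjmap_intertwine[OF phi psi' gperm u2, where f = f2])
    fix ab assume "ab \<in> B"
    then obtain a b where ab: "ab = (a, b)" "a < p" "b < p" unfolding B_def by auto
    show "f2 ab \<in> B" using ab p0 by (simp add: B_def f2_def)
    have "g (\<phi> (a, b)) = \<phi> (f2 (a, b))"
    proof (cases "b + 1 < p")
      case True then show ?thesis using struct_rule_g[OF comm zp gp ab(3), of a] by (simp add: \<phi>_def f2_def)
    next
      case False then show ?thesis using struct_rule_g[OF comm zp gp ab(3), of a] by (simp add: \<phi>_def f2_def)
    qed
    then show "g (\<phi> ab) = \<phi> (f2 ab)" using ab by simp
    show "u2 (\<psi> ab) = \<psi> (f2 ab)" using ab r2 by (simp add: f2_def)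
  qed
  have zc: "z \<in> carrier (symN (p^2))" "g \<in> carrier (symN (p^2))" "u1 \<in> carrier (symN (p^2))" "u2 \<in> carrier (symN (p^2))"
    using zperm gperm u1 u2 by (simp_all add: symN_simps)
  show ?thesis using conj_from_intertwine[OF sc zc(1) zc(3) i1] conj_from_intertwine[OF sc zc(2) zc(4) i2] sc by blast
qed

theorem lemma2p12:
  fixes p :: nat and G :: "(nat \<Rightarrow> nat) set"
  assumes "prime p" and "transitive_group (p^2) G"
  shows "\<exists>s \<in> carrier (symN (p^2)).
           P1 p \<subseteq> (\<lambda>g. s \<circ> g \<circ> inv\<^bsub>symN (p^2)\<^esub> s) ` G \<or> P1' p \<subseteq> (\<lambda>g. s \<circ> g \<circ> inv\<^bsub>symN (p^2)\<^esub> s) ` G"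
proof -
  note p = assms(1)
  have p2: "p \<ge> 2" using prime_ge_2_nat[OF p] .
  then have p0: "p > 0" by simp
  have Gs: "subgroup G (symN (p^2))" using assms(2) unfolding transitive_group_def by simp
  obtain P a where Ps: "subgroup P (symN (p^2))" and PG: "P \<subseteq> G" and cP: "card P = p ^ a"
    and a2: "a \<ge> 2" and trans: "\<forall>y<p^2. \<exists>h\<in>P. h 0 = y"
    using sylow_transitive[OF p assms(2)] by blast
  define Pg where "Pg = (symN (p^2))\<lparr>carrier := P\<rparr>"
  interpret Pg: group Pg unfolding Pg_def by (rule sub_symN_group[OF Ps])
  have finP: "finite (carrier Pg)" using finite_symN_sub[OF Ps] by (simp add: Pg_def)
  have ordPg: "order Pg = p ^ a" using cP by (simp add: order_def Pg_def)
  have Pg_simps: "carrier Pg = P" "\<And>x y. x \<otimes>\<^bsub>Pg\<^esub> y = x \<circ> y" "\<one>\<^bsub>Pg\<^esub> = id"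
    "\<And>x (n::nat). x [^]\<^bsub>Pg\<^esub> n = x ^^ n"
    by (simp_all add: Pg_def symN_simps symN_sub_pow)
  obtain z where zP: "z \<in> P" and zp: "z ^^ p = id" and znot: "\<And>j. 0 < j \<Longrightarrow> j < p \<Longrightarrow> z ^^ j \<noteq> id"
    and zc: "\<And>h. h \<in> P \<Longrightarrow> h \<circ> z = z \<circ> h"
    using Pg.central_elem_p[OF finP ordPg _ p] a2 unfolding Pg_simps by auto
  have Pperm: "\<And>h. h \<in> P \<Longrightarrow> h permutes {0..<p^2}" using sub_perm[OF Ps] .
  have zperm: "z permutes {0..<p^2}" using Pperm[OF zP] .
  have central: "\<And>h y. h \<in> P \<Longrightarrow> h (z y) = z (h y)" using zc by (metis comp_apply)
  have fixfree: "w y \<noteq> y" if wP: "w \<in> P" and wc: "\<And>h x. h \<in> P \<Longrightarrow> h (w x) = w (h x)"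
    and wid: "w \<noteq> id" and y: "y < p^2" for w y
  proof
    assume wy: "w y = y"
    obtain h0 where h0: "h0 \<in> P" "h0 0 = y" using trans y by blast
    have "w y' = y'" for y'
    proof (cases "y' < p^2")
      case True
      obtain h1 where h1: "h1 \<in> P" "h1 0 = y'" using trans True by blast
      define h where "h = h1 \<otimes>\<^bsub>Pg\<^esub> inv\<^bsub>Pg\<^esub> h0"
      have hP: "h \<in> P" unfolding h_def using h0 h1 Pg.m_closed Pg.inv_closed by (simp add: Pg_simps)
      have "inv\<^bsub>Pg\<^esub> h0 = inv_into UNIV h0"
        using group.m_inv_consistent[OF symN_group Ps h0(1)] symN_inv[OF Pperm[OF h0(1)]] by (simp add: Pg_def)
      moreover have "inv_into UNIV h0 y = 0" using h0(2) permutes_inverses(2)[OF Pperm[OF h0(1)]] by metis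
      ultimately have hy: "h y = y'" unfolding h_def using h1 by (simp add: Pg_simps)
      have "w y' = w (h y)" using hy by simp
      also have "\<dots> = h (w y)" using wc[OF hP] by simp
      finally show ?thesis using wy hy by simp
    next
      case False then show ?thesis using Pperm[OF wP] by (simp add: permutes_def)
    qed
    then have "w = id" by auto
    then show False using wid by simp
  qed
  have zkP: "z ^^ k \<in> P" for k using Pg.nat_pow_closed[of z k] zP by (simp add: Pg_simps)
  have zfree: "\<And>y k. y \<in> {0..<p^2} \<Longrightarrow> 0 < k \<Longrightarrow> k < p \<Longrightarrow> (z ^^ k) y \<noteq> y"
  proof -
    fix y k assume "y \<in> {0..<p^2}" "0 < k" "k < p"
    moreover have "\<And>h x. h \<in> P \<Longrightarrow> h ((z ^^ k) x) = (z ^^ k) (h x)"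
      using funpow_comm_pt central by metis
    ultimately show "(z ^^ k) y \<noteq> y" using fixfree[OF zkP] znot by simp
  qed
  have ordP: "h ^^ (p ^ a) = id" if hP: "h \<in> P" for h
  proof -
    have "h \<in> carrier Pg" using hP by (simp add: Pg_simps)
    then have "h [^]\<^bsub>Pg\<^esub> order Pg = \<one>\<^bsub>Pg\<^esub>" by (rule Pg.pow_order_eq_1)
    then show ?thesis unfolding ordPg Pg_simps .
  qed
  have trans': "\<And>y. y < p^2 \<Longrightarrow> \<exists>h\<in>P. h 0 = y" using trans by blast
  from find_g[OF p Pperm trans' zperm central zp zfree ordP]
  obtain g where gP: "g \<in> P" and nb0: "\<forall>k a. 0 < k \<longrightarrow> k < p \<longrightarrow> (g ^^ k) 0 \<noteq> (z ^^ a) 0"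
    and gc: "\<exists>c<p. (g ^^ p) 0 = (z ^^ c) 0" by blast
  from gc obtain c where c: "c < p" and gp: "(g ^^ p) 0 = (z ^^ c) 0" by blast
  have nb: "\<And>k a. 0 < k \<Longrightarrow> k < p \<Longrightarrow> (g ^^ k) 0 \<noteq> (z ^^ a) 0" using nb0 by blast
  have gperm: "g permutes {0..<p^2}" using Pperm[OF gP] .
  have comm: "\<And>y. g (z y) = z (g y)" using central[OF gP] .
  have gG: "g \<in> G" using gP PG by blast
  have rho1c: "rho1 p \<in> carrier (symN (p^2))" using rho1_perm[OF p0] by (simp add: symN_simps)
  have rho2c: "rho2 p \<in> carrier (symN (p^2))" using rho2_perm[OF p0] by (simp add: symN_simps)
  have tauc: "tau p \<in> carrier (symN (p^2))" using tau_perm[OF p0] by (simp add: symN_simps)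
  have gam: "gamma p 1 = rho1 p" using gamma_eq[OF p] .
  show ?thesis
  proof (cases "c = 0")
    case True
    have gp0: "(g ^^ p) 0 = (z ^^ 0) 0" using gp True by simp
    obtain s where sc: "s \<in> carrier (symN (p^2))"
      and s1: "inv\<^bsub>symN (p^2)\<^esub> s \<otimes>\<^bsub>symN (p^2)\<^esub> rho1 p \<otimes>\<^bsub>symN (p^2)\<^esub> s = z"
      and s2: "inv\<^bsub>symN (p^2)\<^esub> s \<otimes>\<^bsub>symN (p^2)\<^esub> rho2 p \<otimes>\<^bsub>symN (p^2)\<^esub> s = g"
      using make_conj[OF p0 gperm zperm comm zp zfree nb gp0 psi0_bij rho1_perm[OF p0] rho2_perm[OF p0]
          psi0_rho1 psi0_rho2] by blast
    have "P1' p \<subseteq> (\<lambda>g. s \<circ> g \<circ> inv\<^bsub>symN (p^2)\<^esub> s) ` G"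
      unfolding P1'_def
    proof (rule final_incl[OF sc Gs])
      show "{rho1 p, rho2 p, gamma p 1} \<subseteq> carrier (symN (p^2))" using rho1c rho2c gam by simp
      fix x assume "x \<in> {rho1 p, rho2 p, gamma p 1}"
      then show "inv\<^bsub>symN (p^2)\<^esub> s \<otimes>\<^bsub>symN (p^2)\<^esub> x \<otimes>\<^bsub>symN (p^2)\<^esub> s \<in> G"
        using s1 s2 gam zP PG gG by auto
    qed
    then show ?thesis using sc by blast
  next
    case False
    define z' where "z' = z ^^ c"
    have z'P: "z' \<in> P" unfolding z'_def by (rule zkP)
    have z'perm: "z' permutes {0..<p^2}" using Pperm[OF z'P] .
    have comm': "\<And>y. g (z' y) = z' (g y)" unfolding z'_def using funpow_comm_pt comm by metis
    have z'pow: "z' ^^ k = z ^^ (c * k)" for k unfolding z'_def by (simp add: funpow_mult)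
    have zp': "z' ^^ p = id"
    proof -
      have "z' ^^ p = z ^^ (p * c)" using z'pow by (simp add: mult.commute)
      also have "\<dots> = (z ^^ p) ^^ c" by (simp add: funpow_mult)
      finally show ?thesis using zp funpow_id_pow by simp
    qed
    have zfree': "(z' ^^ k) y \<noteq> y" if "y \<in> {0..<p^2}" "0 < k" "k < p" for y k
    proof -
      have "(z' ^^ k) y = (z ^^ ((c * k) mod p)) y" using z'pow funpow_mod_id[OF zp] by metis
      moreover have "(c * k) mod p \<noteq> 0"
      proof
        assume "(c * k) mod p = 0"
        then have "p dvd c * k" by (simp add: dvd_eq_mod_eq_0)
        then have "p dvd c \<or> p dvd k" using p prime_dvd_mult_iff by blast
        then show False using False c that by (auto dest: dvd_imp_le)
      qed
      moreover have "(c * k) mod p < p" using p0 by simp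
      ultimately show ?thesis using zfree[OF that(1)] by simp
    qed
    have nb': "(g ^^ k) 0 \<noteq> (z' ^^ b) 0" if "0 < k" "k < p" for k b
      using nb[OF that] z'pow by simp
    have gp': "(g ^^ p) 0 = (z' ^^ 1) 0" using gp by (simp add: z'_def)
    obtain s where sc: "s \<in> carrier (symN (p^2))"
      and s1: "inv\<^bsub>symN (p^2)\<^esub> s \<otimes>\<^bsub>symN (p^2)\<^esub> rho1 p \<otimes>\<^bsub>symN (p^2)\<^esub> s = z'"
      and s2: "inv\<^bsub>symN (p^2)\<^esub> s \<otimes>\<^bsub>symN (p^2)\<^esub> tau p \<otimes>\<^bsub>symN (p^2)\<^esub> s = g"
      using make_conj[OF p0 gperm z'perm comm' zp' zfree' nb' gp' psi1_bij[OF p2] rho1_perm[OF p0] tau_perm[OF p0]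
          psi1_rho1[OF p2] psi1_tau[OF p2]] by blast
    have "P1 p \<subseteq> (\<lambda>g. s \<circ> g \<circ> inv\<^bsub>symN (p^2)\<^esub> s) ` G"
      unfolding P1_def
    proof (rule final_incl[OF sc Gs])
      show "{tau p, gamma p 1} \<subseteq> carrier (symN (p^2))" using rho1c tauc gam by simp
      fix x assume "x \<in> {tau p, gamma p 1}"
      then show "inv\<^bsub>symN (p^2)\<^esub> s \<otimes>\<^bsub>symN (p^2)\<^esub> x \<otimes>\<^bsub>symN (p^2)\<^esub> s \<in> G"
        using s1 s2 gam z'P PG gG by auto
    qed
    then show ?thesis using sc by blast
  qed
qed



thm_deps lemma2p12

end
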